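(* Let $X$ be a finite $n$-dimensional simplicial complex and $0\le k\le n-1$. There exists a $k$-cone function (with some apex) if and only if $\widetilde H_j(X)=\widetilde H^j(X)=0$ for every $0\le j\le k$.
   Context: $X(-1)=\{\emptyset\}$. Over $\mathbb{F}_2$: $C_j(X)$ has basis $X(j)$, $\partial_j\sigma=\sum_{\tau\subset\sigma,|\tau|=|\sigma|-1}\tau$ (so $\partial_0\{u\}=\emptyset$); $\widetilde H_j(X)=\ker\partial_j/\operatorname{Im}\partial_{j+1}$, and $\widetilde H^j(X)$ is the corresponding (reduced) cohomology with $\mathbb{F}_2$ coefficients. Cone function: a $(-1)$-cone function with apex $v$ maps $\emptyset\mapsto\{v\}$; for $k\ge0$, a $k$-cone function with apex $v$ is a linear map $\operatorname{Cone}^v_k:\bigoplus_{j=-1}^kC_j\to\bigoplus_{j=-1}^kC_{j+1}$ (sending $C_j$ into $C_{j+1}$) whose restriction to $\bigoplus_{j=-1}^{k-1}C_j$ is a $(k-1)$-cone function with apex $v$, and with $\partial_{k+1}\operatorname{Cone}^v_k(A)=A+\operatorname{Cone}^v_k(\partial_kA)$ for all $A\in C_k$. *)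

theory Defs
  imports Main
begin

text \<open>Finite abstract simplicial complex: a finite family of (finite) vertex sets,
  closed under taking subsets, and containing the empty face (so that X(-1) = {empty}).\<close>
definition simplicial_complex :: "'a set set \<Rightarrow> bool" where
  "simplicial_complex X \<longleftrightarrow> {} \<in> X \<and> (\<forall>\<sigma>\<in>X. finite \<sigma> \<and> (\<forall>\<tau>. \<tau> \<subseteq> \<sigma> \<longrightarrow> \<tau> \<in> X))"

definition faces :: "'a set set \<Rightarrow> int \<Rightarrow> 'a set set" where
  "faces X j = {\<sigma> \<in> X. int (card \<sigma>) = j + 1}"

definition has_dim :: "'a set set \<Rightarrow> nat \<Rightarrow> bool" where
  "has_dim X n \<longleftrightarrow> (\<exists>\<sigma>\<in>X. card \<sigma> = n + 1) \<and> (\<forall>\<sigma>\<in>X. card \<sigma> \<le> n + 1)"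

text \<open>F_2-chains C_j(X): a chain is identified with its support, a subset of X(j);
  addition is symmetric difference.\<close>
definition chains :: "'a set set \<Rightarrow> int \<Rightarrow> 'a set set set" where
  "chains X j = Pow (faces X j)"

definition sym_diff :: "'b set \<Rightarrow> 'b set \<Rightarrow> 'b set" where
  "sym_diff A B = (A - B) \<union> (B - A)"

definition bd :: "'a set set \<Rightarrow> int \<Rightarrow> 'a set set \<Rightarrow> 'a set set" where
  "bd X j A = {\<tau> \<in> faces X (j - 1). odd (card {\<sigma> \<in> A. \<tau> \<subseteq> \<sigma>})}"

text \<open>F_2-cochains C^j(X) = functions X(j) \<rightarrow> F_2, identified with their supports;
  coboundary \<delta>^j : C^j \<rightarrow> C^(j+1).\<close>
definition cochains :: "'a set set \<Rightarrow> int \<Rightarrow> 'a set set set" where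
  "cochains X j = Pow (faces X j)"

definition cobd :: "'a set set \<Rightarrow> int \<Rightarrow> 'a set set \<Rightarrow> 'a set set" where
  "cobd X j B = {\<sigma> \<in> faces X (j + 1). odd (card {\<tau> \<in> B. \<tau> \<subseteq> \<sigma>})}"

definition homology_vanishes :: "'a set set \<Rightarrow> int \<Rightarrow> bool" where
  "homology_vanishes X j \<longleftrightarrow>
     {A \<in> chains X j. bd X j A = {}} \<subseteq> bd X (j + 1) ` chains X (j + 1)"

definition cohomology_vanishes :: "'a set set \<Rightarrow> int \<Rightarrow> bool" where
  "cohomology_vanishes X j \<longleftrightarrow>
     {B \<in> cochains X j. cobd X j B = {}} \<subseteq> cobd X (j - 1) ` cochains X (j - 1)"

text \<open>A k-cone function with apex v, given by its graded components
  c j : C_j \<rightarrow> C_(j+1) for j = -1..k (a linear map on the direct sum sending C_j into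
  C_(j+1) is exactly such a family of linear maps).\<close>
definition is_cone_function :: "'a set set \<Rightarrow> int \<Rightarrow> 'a \<Rightarrow> (int \<Rightarrow> 'a set set \<Rightarrow> 'a set set) \<Rightarrow> bool" where
  "is_cone_function X k v c \<longleftrightarrow>
     (\<forall>j. -1 \<le> j \<and> j \<le> k \<longrightarrow>
        (\<forall>A \<in> chains X j. c j A \<in> chains X (j + 1)) \<and>
        (\<forall>A \<in> chains X j. \<forall>B \<in> chains X j. c j (sym_diff A B) = sym_diff (c j A) (c j B))) \<and>
     c (-1) {{}} = {{v}} \<and>
     (\<forall>j. 0 \<le> j \<and> j \<le> k \<longrightarrow>
        (\<forall>A \<in> chains X j. bd X (j + 1) (c j A) = sym_diff A (c (j - 1) (bd X j A))))"

end

theory Submission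
  imports Defs "HOL-Library.Z2"
begin

declare add_bit_eq_xor[simp del] mult_bit_eq_and[simp del]

definition ind :: "bool \<Rightarrow> bit" where "ind P = (if P then 1 else 0)"
definition chi :: "'b set \<Rightarrow> 'b \<Rightarrow> bit" where "chi A x = ind (x \<in> A)"

lemma bit_add_self[simp]: "(b::bit) + b = 0"
  by (cases b) simp_all

lemma ind_neq: "ind (P \<noteq> Q) = ind P + ind Q"
  by (simp add: ind_def)

lemma chi_symdiff: "chi (sym_diff A B) x = chi A x + chi B x"
  by (auto simp: chi_def ind_def sym_diff_def)

lemma ind_eq1: "ind ((b::bit) = 1) = b"
  by (cases b) (simp_all add: ind_def)

lemma of_nat_bit: "(of_nat n :: bit) = ind (odd n)"
  by (induction n) (auto simp: ind_def)

lemma sum_ind: "finite S \<Longrightarrow> (\<Sum>x\<in>S. ind (P x)) = ind (odd (card {x\<in>S. P x}))"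
proof -
  assume f: "finite S"
  have "(\<Sum>x\<in>S. ind (P x)) = (\<Sum>x\<in>S. of_bool (P x))" by (simp add: ind_def of_bool_def)
  also have "\<dots> = of_nat (card (S \<inter> {x. P x}))" using f by simp
  also have "S \<inter> {x. P x} = {x\<in>S. P x}" by auto
  finally show ?thesis by (simp add: of_nat_bit)
qed

lemma ind_inj: "(ind P = ind Q) = (P = Q)"
  by (simp add: ind_def)

lemma sum_restrict: "finite U \<Longrightarrow> S \<subseteq> U \<Longrightarrow> (\<Sum>x\<in>S. f x) = (\<Sum>x\<in>U. chi S x * f x)"
proof -
  assume "finite U" "S \<subseteq> U"
  then have "(\<Sum>x\<in>U. chi S x * f x) = (\<Sum>x\<in>U. if x \<in> S then f x else 0)"
    by (intro sum.cong) (auto simp: chi_def ind_def)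
  also have "\<dots> = (\<Sum>x\<in>S. f x)" using \<open>finite U\<close> \<open>S \<subseteq> U\<close>
    by (simp add: sum.If_cases Int_absorb1)
  finally show ?thesis by simp
qed

lemma finite_faces: "finite X \<Longrightarrow> finite (faces X j)"
  by (simp add: faces_def)

lemma chi_bd: assumes "finite X" "C \<subseteq> faces X i"
  shows "chi (bd X i C) \<tau> = ind (\<tau> \<in> faces X (i - 1)) * (\<Sum>\<sigma>\<in>faces X i. chi C \<sigma> * ind (\<tau> \<subseteq> \<sigma>))"
proof -
  have fC: "finite C" using assms finite_faces finite_subset by blast
  have "(\<Sum>\<sigma>\<in>faces X i. chi C \<sigma> * ind (\<tau> \<subseteq> \<sigma>)) = (\<Sum>\<sigma>\<in>C. ind (\<tau> \<subseteq> \<sigma>))"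
    using sum_restrict[OF finite_faces[OF assms(1)] assms(2)] by metis
  also have "\<dots> = ind (odd (card {\<sigma>\<in>C. \<tau> \<subseteq> \<sigma>}))" using sum_ind[OF fC] .
  finally show ?thesis by (simp add: chi_def bd_def ind_def)
qed

lemma chi_cobd: assumes "finite X" "B \<subseteq> faces X j"
  shows "chi (cobd X j B) \<sigma> = ind (\<sigma> \<in> faces X (j + 1)) * (\<Sum>\<tau>\<in>faces X j. chi B \<tau> * ind (\<tau> \<subseteq> \<sigma>))"
proof -
  have fC: "finite B" using assms finite_faces finite_subset by blast
  have "(\<Sum>\<tau>\<in>faces X j. chi B \<tau> * ind (\<tau> \<subseteq> \<sigma>)) = (\<Sum>\<tau>\<in>B. ind (\<tau> \<subseteq> \<sigma>))"
    using sum_restrict[OF finite_faces[OF assms(1)] assms(2)] by metis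
  also have "\<dots> = ind (odd (card {\<tau>\<in>B. \<tau> \<subseteq> \<sigma>}))" using sum_ind[OF fC] .
  finally show ?thesis by (simp add: chi_def cobd_def ind_def)
qed

lemma set_eq_chi: "(\<And>x. chi A x = chi B x) \<Longrightarrow> A = B"
  by (auto simp: chi_def ind_def) (metis one_neq_zero)+

definition pr :: "'b set \<Rightarrow> 'b set \<Rightarrow> 'b set \<Rightarrow> bit" where
  "pr U P B = (\<Sum>x\<in>U. chi P x * chi B x)"

lemma pr_symdiff: "pr U (sym_diff P Q) B = pr U P B + pr U Q B"
  by (simp add: pr_def chi_symdiff distrib_right sum.distrib)

lemma chi_single: "chi {s} x = (if x = s then 1 else 0)"
  by (simp add: chi_def ind_def)

lemma pr_single: "finite U \<Longrightarrow> s \<in> U \<Longrightarrow> pr U {s} B = chi B s"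
proof -
  assume "finite U" "s \<in> U"
  have "\<And>x. chi {s} x * chi B x = (if x = s then chi B x else 0)" by (simp add: chi_single)
  then show ?thesis using \<open>finite U\<close> \<open>s \<in> U\<close> by (simp add: pr_def)
qed

lemma pr_empty2: "pr U P {} = 0"
  by (simp add: pr_def chi_def ind_def)

lemma pr_bd_cobd: assumes "finite X" "C \<subseteq> faces X i" "B \<subseteq> faces X (i - 1)"
  shows "pr (faces X (i - 1)) (bd X i C) B = pr (faces X i) C (cobd X (i - 1) B)"
proof -
  have "pr (faces X (i - 1)) (bd X i C) B =
     (\<Sum>\<tau>\<in>faces X (i - 1). (\<Sum>\<sigma>\<in>faces X i. chi C \<sigma> * ind (\<tau> \<subseteq> \<sigma>)) * chi B \<tau>)"
    unfolding pr_def by (intro sum.cong refl) (simp add: chi_bd[OF assms(1,2)] ind_def)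
  also have "\<dots> = (\<Sum>\<tau>\<in>faces X (i - 1). \<Sum>\<sigma>\<in>faces X i. chi C \<sigma> * ind (\<tau> \<subseteq> \<sigma>) * chi B \<tau>)"
    by (simp add: sum_distrib_right)
  also have "\<dots> = (\<Sum>\<sigma>\<in>faces X i. \<Sum>\<tau>\<in>faces X (i - 1). chi C \<sigma> * ind (\<tau> \<subseteq> \<sigma>) * chi B \<tau>)"
    by (rule sum.swap)
  also have "\<dots> = (\<Sum>\<sigma>\<in>faces X i. chi C \<sigma> * (\<Sum>\<tau>\<in>faces X (i - 1). chi B \<tau> * ind (\<tau> \<subseteq> \<sigma>)))"
    by (simp add: sum_distrib_left mult.commute mult.left_commute)
  also have "\<dots> = pr (faces X i) C (cobd X (i - 1) B)"
    unfolding pr_def by (intro sum.cong refl) (simp add: chi_cobd[OF assms(1,3)] ind_def)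
  finally show ?thesis .
qed

definition lin :: "'a set set \<Rightarrow> int \<Rightarrow> int \<Rightarrow> ('a set set \<Rightarrow> 'a set set) \<Rightarrow> bool" where
  "lin X j j' g \<longleftrightarrow> (\<forall>A\<in>chains X j. g A \<in> chains X j') \<and>
     (\<forall>A\<in>chains X j. \<forall>B\<in>chains X j. g (sym_diff A B) = sym_diff (g A) (g B))"

lemma lin_empty: "lin X j j' g \<Longrightarrow> g {} = {}"
  unfolding lin_def chains_def
  by (metis Pow_bottom Diff_cancel sup.idem sym_diff_def)

lemma lin_expand: assumes "lin X j j' g" "finite X" "A \<subseteq> faces X j"
  shows "chi (g A) x = (\<Sum>\<sigma>\<in>faces X j. chi A \<sigma> * chi (g {\<sigma>}) x)"
proof -
  have fA: "finite A" using assms finite_faces finite_subset by blast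
  from fA assms(3) show ?thesis
  proof (induction A rule: finite_induct)
    case empty
    then show ?case using lin_empty[OF assms(1)] by (simp add: chi_def ind_def)
  next
    case (insert a A)
    have e: "insert a A = sym_diff {a} A" using insert by (auto simp: sym_diff_def)
    have "g (sym_diff {a} A) = sym_diff (g {a}) (g A)"
      using assms(1) insert unfolding lin_def chains_def by simp
    then have "g (insert a A) = sym_diff (g {a}) (g A)" using e by simp
    then have "chi (g (insert a A)) x = chi (g {a}) x + chi (g A) x" by (simp add: chi_symdiff)
    also have "chi (g {a}) x = (\<Sum>\<sigma>\<in>faces X j. chi {a} \<sigma> * chi (g {\<sigma>}) x)"
    proof -
      have "\<And>\<sigma>. chi {a} \<sigma> * chi (g {\<sigma>}) x = (if \<sigma> = a then chi (g {a}) x else 0)"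
        by (simp add: chi_single)
      then show ?thesis using insert finite_faces[OF assms(2)] by simp
    qed
    also have "chi (g A) x = (\<Sum>\<sigma>\<in>faces X j. chi A \<sigma> * chi (g {\<sigma>}) x)" using insert by auto
    finally show ?case unfolding e by (simp add: chi_symdiff distrib_right sum.distrib)
  qed
qed

lemma bd_lin: "finite X \<Longrightarrow> lin X j (j - 1) (bd X j)"
  unfolding lin_def
proof (intro conjI ballI)
  fix A assume "A \<in> chains X j" then show "bd X j A \<in> chains X (j - 1)"
    by (auto simp: chains_def bd_def)
next
  fix A B assume X: "finite X" and A: "A \<in> chains X j" and B: "B \<in> chains X j"
  have S: "sym_diff A B \<subseteq> faces X j" using A B by (auto simp: chains_def sym_diff_def)
  show "bd X j (sym_diff A B) = sym_diff (bd X j A) (bd X j B)"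
    apply (rule set_eq_chi)
    using A B by (simp add: chi_symdiff chi_bd[OF X S] chi_bd[OF X] chains_def distrib_right
        sum.distrib distrib_left)
qed

lemma bd_single: "\<sigma> \<in> faces X j \<Longrightarrow> bd X j {\<sigma>} = {\<tau> \<in> faces X (j - 1). \<tau> \<subseteq> \<sigma>}"
proof -
  assume "\<sigma> \<in> faces X j"
  have "\<And>\<tau>. {\<sigma>' \<in> {\<sigma>}. \<tau> \<subseteq> \<sigma>'} = (if \<tau> \<subseteq> \<sigma> then {\<sigma>} else {})" by auto
  then show ?thesis by (auto simp: bd_def)
qed

lemma card_between: assumes "simplicial_complex X" "\<sigma> \<in> X" "\<rho> \<subseteq> \<sigma>" "card \<sigma> = card \<rho> + 2"
  shows "card {\<tau> \<in> X. int (card \<tau>) = int (card \<rho>) + 1 \<and> \<rho> \<subseteq> \<tau> \<and> \<tau> \<subseteq> \<sigma>} = 2"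
proof -
  have fs: "finite \<sigma>" using assms unfolding simplicial_complex_def by blast
  have fr: "finite \<rho>" using fs assms(3) finite_subset by blast
  have eq: "{\<tau> \<in> X. int (card \<tau>) = int (card \<rho>) + 1 \<and> \<rho> \<subseteq> \<tau> \<and> \<tau> \<subseteq> \<sigma>} = (\<lambda>x. insert x \<rho>) ` (\<sigma> - \<rho>)"
  proof (intro set_eqI iffI)
    fix \<tau> assume t: "\<tau> \<in> {\<tau> \<in> X. int (card \<tau>) = int (card \<rho>) + 1 \<and> \<rho> \<subseteq> \<tau> \<and> \<tau> \<subseteq> \<sigma>}"
    then have ft: "finite \<tau>" using fs finite_subset by blast
    have "card (\<tau> - \<rho>) = 1" using t fr by (simp add: card_Diff_subset) linarith
    then obtain x where x: "\<tau> - \<rho> = {x}" using card_1_singletonE by blast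
    then have "\<tau> = insert x \<rho>" using t by auto
    moreover have "x \<in> \<sigma> - \<rho>" using x t by auto
    ultimately show "\<tau> \<in> (\<lambda>x. insert x \<rho>) ` (\<sigma> - \<rho>)" by blast
  next
    fix \<tau> assume "\<tau> \<in> (\<lambda>x. insert x \<rho>) ` (\<sigma> - \<rho>)"
    then obtain x where x: "x \<in> \<sigma> - \<rho>" "\<tau> = insert x \<rho>" by blast
    have "\<tau> \<in> X" using assms(1,2,3) x unfolding simplicial_complex_def by blast
    then show "\<tau> \<in> {\<tau> \<in> X. int (card \<tau>) = int (card \<rho>) + 1 \<and> \<rho> \<subseteq> \<tau> \<and> \<tau> \<subseteq> \<sigma>}"
      using x fr assms(3) by auto
  qed
  have "inj_on (\<lambda>x. insert x \<rho>) (\<sigma> - \<rho>)" by (auto simp: inj_on_def)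
  then have "card ((\<lambda>x. insert x \<rho>) ` (\<sigma> - \<rho>)) = card (\<sigma> - \<rho>)" by (rule card_image)
  also have "\<dots> = 2" using assms(3,4) fr by (simp add: card_Diff_subset)
  finally show ?thesis using eq by simp
qed

lemma bdbd_single: assumes "simplicial_complex X" "\<sigma> \<in> faces X j"
  shows "bd X (j - 1) (bd X j {\<sigma>}) = {}"
proof -
  have "\<not> odd (card {\<tau> \<in> bd X j {\<sigma>}. \<rho> \<subseteq> \<tau>})" if r: "\<rho> \<in> faces X (j - 1 - 1)" for \<rho>
  proof (cases "\<rho> \<subseteq> \<sigma>")
    case False
    then have "{\<tau> \<in> bd X j {\<sigma>}. \<rho> \<subseteq> \<tau>} = {}" using bd_single[OF assms(2)] by auto
    then show ?thesis by (simp only: card.empty) simp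
  next
    case True
    have "{\<tau> \<in> bd X j {\<sigma>}. \<rho> \<subseteq> \<tau>} = {\<tau> \<in> X. int (card \<tau>) = int (card \<rho>) + 1 \<and> \<rho> \<subseteq> \<tau> \<and> \<tau> \<subseteq> \<sigma>}"
      using bd_single[OF assms(2)] r by (auto simp: faces_def)
    moreover have "card \<sigma> = card \<rho> + 2" using r assms(2) by (simp add: faces_def)
    ultimately show ?thesis using card_between[OF assms(1) _ True] assms(2)
      by (simp add: faces_def)
  qed
  then show ?thesis unfolding bd_def[of X "j - 1"] by auto
qed

lemma cone_lin: "is_cone_function X k v c \<Longrightarrow> -1 \<le> j \<Longrightarrow> j \<le> k \<Longrightarrow> lin X j (j + 1) (c j)"
  unfolding is_cone_function_def lin_def by (intro conjI; (elim conjE allE[of _ j]); simp)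

lemma cone_eq: "is_cone_function X k v c \<Longrightarrow> 0 \<le> j \<Longrightarrow> j \<le> k \<Longrightarrow> A \<in> chains X j \<Longrightarrow>
   bd X (j + 1) (c j A) = sym_diff A (c (j - 1) (bd X j A))"
  unfolding is_cone_function_def by (elim conjE allE[of _ j]) simp

lemma cone_hom: assumes "is_cone_function X k v c" "0 \<le> j" "j \<le> k"
  shows "homology_vanishes X j"
  unfolding homology_vanishes_def
proof
  fix A assume A: "A \<in> {A \<in> chains X j. bd X j A = {}}"
  have "c (j - 1) {} = {}" using lin_empty[OF cone_lin[OF assms(1)]] assms by simp
  then have "bd X (j + 1) (c j A) = A" using cone_eq[OF assms, of A] A by (simp add: sym_diff_def)
  moreover have "c j A \<in> chains X (j + 1)" using cone_lin[OF assms(1)] assms A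
    by (simp add: lin_def)
  ultimately show "A \<in> bd X (j + 1) ` chains X (j + 1)" by (metis image_eqI)
qed

lemma cone_cohom: assumes "is_cone_function X k v c" "0 \<le> j" "j \<le> k" "finite X"
  shows "cohomology_vanishes X j"
  unfolding cohomology_vanishes_def
proof
  fix B assume B: "B \<in> {B \<in> cochains X j. cobd X j B = {}}"
  then have Bf: "B \<subseteq> faces X j" and Bc: "cobd X j B = {}" by (auto simp: cochains_def)
  define B' where "B' = {\<tau> \<in> faces X (j - 1). pr (faces X j) (c (j - 1) {\<tau>}) B = 1}"
  have B'f: "B' \<subseteq> faces X (j - 1)" by (auto simp: B'_def)
  have lc: "lin X (j - 1) j (c (j - 1))" using cone_lin[OF assms(1), of "j - 1"] assms by simp
  have fF: "finite (faces X i)" for i using finite_faces[OF assms(4)] .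
  have "chi B \<sigma> = chi (cobd X (j - 1) B') \<sigma>" for \<sigma>
  proof (cases "\<sigma> \<in> faces X j")
    case False
    then show ?thesis using Bf chi_cobd[OF assms(4) B'f, of \<sigma>] by (auto simp: chi_def ind_def)
  next
    case True
    define D where "D = bd X j {\<sigma>}"
    have Df: "D \<subseteq> faces X (j - 1)" by (auto simp: D_def bd_def)
    have "chi (cobd X (j - 1) B') \<sigma> = pr (faces X j) {\<sigma>} (cobd X (j - 1) B')"
      using pr_single[OF fF True] by simp
    also have "\<dots> = pr (faces X (j - 1)) D B'"
      using pr_bd_cobd[OF assms(4) _ B'f, of "{\<sigma>}"] True by (simp add: D_def)
    also have "\<dots> = (\<Sum>\<tau>\<in>faces X (j - 1). chi D \<tau> * (\<Sum>x\<in>faces X j. chi (c (j - 1) {\<tau>}) x * chi B x))"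
    proof -
      have cB': "chi B' \<tau> = pr (faces X j) (c (j - 1) {\<tau>}) B" if "\<tau> \<in> faces X (j - 1)" for \<tau>
        using that by (simp add: B'_def chi_def ind_eq1)
      have "pr (faces X (j - 1)) D B' = (\<Sum>\<tau>\<in>faces X (j - 1). chi D \<tau> * pr (faces X j) (c (j - 1) {\<tau>}) B)"
        unfolding pr_def[of "faces X (j - 1)" D B'] by (intro sum.cong refl) (simp add: cB')
      then show ?thesis by (simp only: pr_def)
    qed
    also have "\<dots> = (\<Sum>x\<in>faces X j. (\<Sum>\<tau>\<in>faces X (j - 1). chi D \<tau> * chi (c (j - 1) {\<tau>}) x) * chi B x)"
    proof -
      have "(\<Sum>\<tau>\<in>faces X (j - 1). chi D \<tau> * (\<Sum>x\<in>faces X j. chi (c (j - 1) {\<tau>}) x * chi B x))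
         = (\<Sum>\<tau>\<in>faces X (j - 1). \<Sum>x\<in>faces X j. chi D \<tau> * chi (c (j - 1) {\<tau>}) x * chi B x)"
        by (simp only: sum_distrib_left mult.assoc)
      also have "\<dots> = (\<Sum>x\<in>faces X j. \<Sum>\<tau>\<in>faces X (j - 1). chi D \<tau> * chi (c (j - 1) {\<tau>}) x * chi B x)"
        by (rule sum.swap)
      also have "\<dots> = (\<Sum>x\<in>faces X j. (\<Sum>\<tau>\<in>faces X (j - 1). chi D \<tau> * chi (c (j - 1) {\<tau>}) x) * chi B x)"
        by (simp only: sum_distrib_right)
      finally show ?thesis .
    qed
    also have "\<dots> = pr (faces X j) (c (j - 1) D) B"
      unfolding pr_def by (intro sum.cong refl) (simp add: lin_expand[OF lc assms(4) Df])
    also have "c (j - 1) D = sym_diff {\<sigma>} (bd X (j + 1) (c j {\<sigma>}))"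
      using cone_eq[OF assms(1-3), of "{\<sigma>}"] True by (auto simp: D_def chains_def sym_diff_def)
    also have "pr (faces X j) \<dots> B = chi B \<sigma> + pr (faces X j) (bd X (j + 1) (c j {\<sigma>})) B"
      by (simp add: pr_symdiff pr_single[OF fF True])
    also have "pr (faces X j) (bd X (j + 1) (c j {\<sigma>})) B = 0"
    proof -
      have "c j {\<sigma>} \<subseteq> faces X (j + 1)" using cone_lin[OF assms(1), of j] assms True
        by (auto simp: lin_def chains_def)
      then show ?thesis using pr_bd_cobd[OF assms(4), of "c j {\<sigma>}" "j + 1" B] Bf Bc
        by (simp add: pr_empty2)
    qed
    finally show ?thesis by simp
  qed
  then have "B = cobd X (j - 1) B'" by (rule set_eq_chi)
  moreover have "B' \<in> cochains X (j - 1)" using B'f by (simp add: cochains_def)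
  ultimately show "B \<in> cobd X (j - 1) ` cochains X (j - 1)" by blast
qed

lemma chi_outside: "A \<subseteq> S \<Longrightarrow> x \<notin> S \<Longrightarrow> chi A x = 0"
  by (auto simp: chi_def ind_def)

lemma chi_inside: "x \<in> A \<Longrightarrow> chi A x = 1"
  by (auto simp: chi_def ind_def)

lemma cone_step:
  assumes sc: "simplicial_complex X" and fin: "finite X" and cone: "is_cone_function X (M - 1) v c"
    and M0: "0 \<le> M" and hv: "homology_vanishes X M" and vX: "{v} \<in> X"
  shows "\<exists>c'. is_cone_function X M v c'"
proof -
  have fF: "finite (faces X i)" for i using finite_faces[OF fin] .
  have lc: "lin X (M - 1) M (c (M - 1))" using cone_lin[OF cone, of "M - 1"] M0 by simp
  have lbd: "lin X M (M - 1) (bd X M)" by (rule bd_lin[OF fin])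
  define g where "g A = sym_diff A (c (M - 1) (bd X M A))" for A
  have lg: "lin X M M g"
    unfolding lin_def
  proof (intro conjI ballI)
    fix A assume A: "A \<in> chains X M"
    then have "bd X M A \<in> chains X (M - 1)" using lbd by (simp add: lin_def)
    then have "c (M - 1) (bd X M A) \<in> chains X M" using lc by (simp add: lin_def)
    then show "g A \<in> chains X M" using A by (auto simp: g_def chains_def sym_diff_def)
  next
    fix A B assume A: "A \<in> chains X M" and B: "B \<in> chains X M"
    have "bd X M (sym_diff A B) = sym_diff (bd X M A) (bd X M B)" using lbd A B by (simp add: lin_def)
    moreover have "bd X M A \<in> chains X (M - 1)" "bd X M B \<in> chains X (M - 1)"
      using lbd A B by (simp_all add: lin_def)
    ultimately have "c (M - 1) (bd X M (sym_diff A B)) = sym_diff (c (M - 1) (bd X M A)) (c (M - 1) (bd X M B))"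
      using lc by (simp add: lin_def)
    then show "g (sym_diff A B) = sym_diff (g A) (g B)"
      unfolding g_def by (intro set_eq_chi) (simp add: chi_symdiff ac_simps)
  qed
  have cyc: "g {\<sigma>} \<in> chains X M \<and> bd X M (g {\<sigma>}) = {}" if s: "\<sigma> \<in> faces X M" for \<sigma>
  proof
    show "g {\<sigma>} \<in> chains X M" using lg s by (simp add: lin_def chains_def)
    define D where "D = bd X M {\<sigma>}"
    have Dc: "D \<in> chains X (M - 1)" using lbd s by (simp add: lin_def chains_def D_def)
    have cD: "c (M - 1) D \<in> chains X M" using lc Dc by (simp add: lin_def)
    have "bd X M (g {\<sigma>}) = sym_diff D (bd X M (c (M - 1) D))"
      using lbd s cD unfolding g_def D_def by (simp add: lin_def chains_def)
    also have "bd X M (c (M - 1) D) = D"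
    proof (cases "M = 0")
      case True
      have e: "faces X (-1) = {{}}" using sc fin by (auto simp: faces_def simplicial_complex_def)
      have "D = {{}}" using s True by (auto simp: D_def bd_single e)
      moreover have "c (-1) {{}} = {{v}}" using cone by (simp add: is_cone_function_def)
      moreover have "{v} \<in> faces X 0" using vX by (simp add: faces_def)
      ultimately show ?thesis using True by (auto simp: bd_single e)
    next
      case False
      have "bd X (M - 1 + 1) (c (M - 1) D) = sym_diff D (c (M - 1 - 1) (bd X (M - 1) D))"
        using cone_eq[OF cone, of "M - 1" D] False M0 Dc by simp
      moreover have "bd X (M - 1) D = {}" using bdbd_single[OF sc s] by (simp add: D_def)
      moreover have "c (M - 1 - 1) {} = {}"
        using lin_empty[OF cone_lin[OF cone, of "M - 1 - 1"]] False M0 by simp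
      ultimately show ?thesis by (simp add: sym_diff_def)
    qed
    finally show "bd X M (g {\<sigma>}) = {}" by (simp add: sym_diff_def)
  qed
  have "\<forall>\<sigma>\<in>faces X M. \<exists>Y. Y \<in> chains X (M + 1) \<and> bd X (M + 1) Y = g {\<sigma>}"
    using cyc hv unfolding homology_vanishes_def by blast
  then obtain f where f: "\<And>\<sigma>. \<sigma> \<in> faces X M \<Longrightarrow> f \<sigma> \<in> chains X (M + 1) \<and> bd X (M + 1) (f \<sigma>) = g {\<sigma>}"
    by metis
  define new where "new A = {\<rho> \<in> faces X (M + 1). (\<Sum>\<sigma>\<in>faces X M. chi A \<sigma> * chi (f \<sigma>) \<rho>) = 1}" for A
  have chi_new: "chi (new A) \<rho> = ind (\<rho> \<in> faces X (M + 1)) * (\<Sum>\<sigma>\<in>faces X M. chi A \<sigma> * chi (f \<sigma>) \<rho>)" for A \<rho>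
  proof (cases "\<rho> \<in> faces X (M + 1)")
    case True
    have "chi (new A) \<rho> = ind ((\<Sum>\<sigma>\<in>faces X M. chi A \<sigma> * chi (f \<sigma>) \<rho>) = 1)"
      unfolding chi_def[of "new A"] using True by (simp add: new_def)
    then show ?thesis using True by (simp add: ind_eq1 ind_def[of True])
  next
    case False then show ?thesis by (simp add: new_def chi_def ind_def)
  qed
  have lnew: "lin X M (M + 1) new"
    unfolding lin_def
  proof (intro conjI ballI)
    fix A show "new A \<in> chains X (M + 1)" by (auto simp: new_def chains_def)
  next
    fix A B
    show "new (sym_diff A B) = sym_diff (new A) (new B)"
      by (intro set_eq_chi) (simp add: chi_symdiff chi_new distrib_right distrib_left sum.distrib)
  qed
  have bdnew: "bd X (M + 1) (new A) = g A" if A: "A \<in> chains X M" for A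
  proof (rule set_eq_chi)
    fix \<tau>
    show "chi (bd X (M + 1) (new A)) \<tau> = chi (g A) \<tau>"
    proof (cases "\<tau> \<in> faces X M")
      case False
      have "g A \<subseteq> faces X M" using lg A by (simp add: lin_def chains_def)
      then show ?thesis using False chi_outside[of "g A" "faces X M" \<tau>]
          chi_outside[of "bd X (M + 1) (new A)" "faces X M" \<tau>] by (auto simp: bd_def)
    next
      case True
      have nA: "new A \<subseteq> faces X (M + 1)" by (auto simp: new_def)
      have "chi (bd X (M + 1) (new A)) \<tau> =
          (\<Sum>\<rho>\<in>faces X (M + 1). chi (new A) \<rho> * ind (\<tau> \<subseteq> \<rho>))"
        using chi_bd[OF fin nA, of \<tau>] True by (simp add: ind_def)
      also have "\<dots> = (\<Sum>\<rho>\<in>faces X (M + 1). \<Sum>\<sigma>\<in>faces X M. chi A \<sigma> * (chi (f \<sigma>) \<rho> * ind (\<tau> \<subseteq> \<rho>)))"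
        by (intro sum.cong refl) (simp add: chi_new ind_def sum_distrib_right mult.assoc)
      also have "\<dots> = (\<Sum>\<sigma>\<in>faces X M. \<Sum>\<rho>\<in>faces X (M + 1). chi A \<sigma> * (chi (f \<sigma>) \<rho> * ind (\<tau> \<subseteq> \<rho>)))"
        by (rule sum.swap)
      also have "\<dots> = (\<Sum>\<sigma>\<in>faces X M. chi A \<sigma> * chi (g {\<sigma>}) \<tau>)"
      proof (intro sum.cong refl)
        fix \<sigma> assume s: "\<sigma> \<in> faces X M"
        have fs: "f \<sigma> \<subseteq> faces X (M + 1)" using f[OF s] by (simp add: chains_def)
        have "chi (g {\<sigma>}) \<tau> = (\<Sum>\<rho>\<in>faces X (M + 1). chi (f \<sigma>) \<rho> * ind (\<tau> \<subseteq> \<rho>))"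
          using f[OF s] chi_bd[OF fin fs, of \<tau>] True by (simp add: ind_def)
        then show "(\<Sum>\<rho>\<in>faces X (M + 1). chi A \<sigma> * (chi (f \<sigma>) \<rho> * ind (\<tau> \<subseteq> \<rho>))) = chi A \<sigma> * chi (g {\<sigma>}) \<tau>"
          by (simp only: sum_distrib_left)
      qed
      also have "\<dots> = chi (g A) \<tau>"
        using lin_expand[OF lg fin, of A \<tau>] A by (simp add: chains_def)
      finally show ?thesis .
    qed
  qed
  define c' where "c' = c(M := new)"
  have "is_cone_function X M v c'"
    unfolding is_cone_function_def
  proof (intro conjI allI impI)
    fix j assume j: "-1 \<le> j \<and> j \<le> M"
    have "lin X j (j + 1) (c' j)"
    proof (cases "j = M")
      case True then show ?thesis using lnew by (simp add: c'_def)
    next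
      case False then show ?thesis using cone_lin[OF cone, of j] j by (simp add: c'_def)
    qed
    then show "\<forall>A\<in>chains X j. c' j A \<in> chains X (j + 1)"
      "\<forall>A\<in>chains X j. \<forall>B\<in>chains X j. c' j (sym_diff A B) = sym_diff (c' j A) (c' j B)"
      by (simp_all add: lin_def)
  next
    show "c' (-1) {{}} = {{v}}" using cone M0 by (simp add: c'_def is_cone_function_def)
  next
    fix j assume j: "0 \<le> j \<and> j \<le> M"
    show "\<forall>A\<in>chains X j. bd X (j + 1) (c' j A) = sym_diff A (c' (j - 1) (bd X j A))"
    proof
      fix A assume A: "A \<in> chains X j"
      show "bd X (j + 1) (c' j A) = sym_diff A (c' (j - 1) (bd X j A))"
      proof (cases "j = M")
        case True then show ?thesis using bdnew A by (simp add: c'_def g_def)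
      next
        case False then show ?thesis using cone_eq[OF cone, of j A] j A by (simp add: c'_def)
      qed
    qed
  qed
  then show ?thesis by blast
qed

lemma cone_base: assumes "{v} \<in> X"
  shows "is_cone_function X (-1) v (\<lambda>j A. if {} \<in> A then {{v}} else {})"
  unfolding is_cone_function_def
proof (intro conjI allI impI)
  fix j :: int assume "-1 \<le> j \<and> j \<le> -1"
  then have j: "j = -1" by simp
  have v0: "{{v}} \<in> chains X 0" using assms by (simp add: chains_def faces_def)
  show "\<forall>A\<in>chains X j. (if {} \<in> A then {{v}} else {}) \<in> chains X (j + 1)"
    using v0 j by (auto simp: chains_def)
  show "\<forall>A\<in>chains X j. \<forall>B\<in>chains X j. (if {} \<in> sym_diff A B then {{v}} else {}) =
      sym_diff (if {} \<in> A then {{v}} else {}) (if {} \<in> B then {{v}} else {})"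
    by (auto simp: sym_diff_def)
qed auto

lemma cone_upto:
  assumes sc: "simplicial_complex X" and fin: "finite X" and vX: "{v} \<in> X"
    and hv: "\<forall>j::int. 0 \<le> j \<and> j \<le> int k \<longrightarrow> homology_vanishes X j"
  shows "m \<le> k + 1 \<Longrightarrow> \<exists>c. is_cone_function X (int m - 1) v c"
proof (induction m)
  case 0 then show ?case using cone_base[OF vX] by auto
next
  case (Suc m)
  then obtain c where "is_cone_function X (int m - 1) v c" by auto
  moreover have "homology_vanishes X (int m)" using hv Suc by auto
  ultimately have "\<exists>c'. is_cone_function X (int m) v c'"
    using cone_step[OF sc fin, of "int m" v c] vX by auto
  then show ?case by simp
qed

theorem propositionA1:
  fixes X :: "'a set set" and n k :: nat
  assumes "simplicial_complex X" and "finite X" and "has_dim X n" and "k + 1 \<le> n"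
  shows "(\<exists>v c. is_cone_function X (int k) v c) \<longleftrightarrow>
         (\<forall>j::int. 0 \<le> j \<and> j \<le> int k \<longrightarrow> homology_vanishes X j \<and> cohomology_vanishes X j)"
proof
  assume "\<exists>v c. is_cone_function X (int k) v c"
  then obtain v c where c: "is_cone_function X (int k) v c" by blast
  show "\<forall>j::int. 0 \<le> j \<and> j \<le> int k \<longrightarrow> homology_vanishes X j \<and> cohomology_vanishes X j"
    using cone_hom[OF c] cone_cohom[OF c _ _ assms(2)] by blast
next
  assume h: "\<forall>j::int. 0 \<le> j \<and> j \<le> int k \<longrightarrow> homology_vanishes X j \<and> cohomology_vanishes X j"
  obtain \<sigma> where s: "\<sigma> \<in> X" "card \<sigma> = n + 1" using assms(3) by (auto simp: has_dim_def)
  then have "\<sigma> \<noteq> {}" by auto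
  then obtain v where "v \<in> \<sigma>" by blast
  then have vX: "{v} \<in> X" using s assms(1) by (auto simp: simplicial_complex_def)
  have "\<exists>c. is_cone_function X (int (k + 1) - 1) v c"
    using cone_upto[OF assms(1,2) vX, of k "k + 1"] h by auto
  then show "\<exists>v c. is_cone_function X (int k) v c" by auto
qed

end
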